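(* $\mathit{HM}^\ell_1(X)$ is freely generated by the ordered pairs of distinct adjacent points of $X$ at distance $\ell$ apart. In particular, $\mathit{HM}_1(X)=0$ (in all gradings $\ell$) if and only if $X$ is Menger convex.
   Context: Let $X$ be a metric space. A point $y$ is strictly between $x$ and $z$ if $d(x,y)+d(y,z)=d(x,z)$ and $x\neq y\neq z$. Two points are non-adjacent if some point lies strictly between them, and adjacent otherwise; $X$ is Menger convex if any two distinct points are non-adjacent. The magnitude homology $\mathit{HM}^\ell_n(X)$ is the degree-$n$ homology of the chain complex whose $n$-chains in grading $\ell$ are the free abelian group on symbols $\langle x_0,\dots,x_n\rangle$ with $x_i\neq x_{i+1}$ and $d(x_0,x_1)+\cdots+d(x_{n-1},x_n)=\ell$, with boundary $\sum_i(-1)^i d^i$, where $d^i$ deletes $x_i$ if $d(x_{i-1},x_i)+d(x_i,x_{i+1})=d(x_{i-1},x_{i+1})$ and is $0$ otherwise (deleting an endpoint always gives $0$). *)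

theory Defs
  imports "HOL-Analysis.Abstract_Metric_Spaces" "HOL-Algebra.Free_Abelian_Groups"
    "HOL-Algebra.Elementary_Groups"
begin

text \<open>A tuple (x_0,...,x_n) is
  represented as a list of length n+1; chains are finitely supported integer
  valued functions on lists (free Abelian groups as in HOL-Algebra).\<close>

definition strictly_between :: "'a set \<Rightarrow> ('a \<Rightarrow> 'a \<Rightarrow> real) \<Rightarrow> 'a \<Rightarrow> 'a \<Rightarrow> 'a \<Rightarrow> bool" where
  "strictly_between M d x y z \<longleftrightarrow> y \<in> M \<and> d x y + d y z = d x z \<and> x \<noteq> y \<and> y \<noteq> z"

definition adjacent :: "'a set \<Rightarrow> ('a \<Rightarrow> 'a \<Rightarrow> real) \<Rightarrow> 'a \<Rightarrow> 'a \<Rightarrow> bool" where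
  "adjacent M d x z \<longleftrightarrow> \<not> (\<exists>y. strictly_between M d x y z)"

definition Menger_convex :: "'a set \<Rightarrow> ('a \<Rightarrow> 'a \<Rightarrow> real) \<Rightarrow> bool" where
  "Menger_convex M d \<longleftrightarrow> (\<forall>x\<in>M. \<forall>z\<in>M. x \<noteq> z \<longrightarrow> \<not> adjacent M d x z)"

definition mag_tuples :: "'a set \<Rightarrow> ('a \<Rightarrow> 'a \<Rightarrow> real) \<Rightarrow> nat \<Rightarrow> real \<Rightarrow> 'a list set" where
  "mag_tuples M d n l = {xs. length xs = Suc n \<and> set xs \<subseteq> M \<and>
      (\<forall>i<n. xs ! i \<noteq> xs ! Suc i) \<and> (\<Sum>i<n. d (xs ! i) (xs ! Suc i)) = l}"

definition MC :: "'a set \<Rightarrow> ('a \<Rightarrow> 'a \<Rightarrow> real) \<Rightarrow> nat \<Rightarrow> real \<Rightarrow> ('a list \<Rightarrow>\<^sub>0 int) monoid" where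
  "MC M d n l = free_Abelian_group (mag_tuples M d n l)"

definition mag_face :: "('a \<Rightarrow> 'a \<Rightarrow> real) \<Rightarrow> nat \<Rightarrow> 'a list \<Rightarrow> ('a list \<Rightarrow>\<^sub>0 int)" where
  "mag_face d i xs =
     (if 0 < i \<and> Suc i < length xs \<and>
         d (xs ! (i - 1)) (xs ! i) + d (xs ! i) (xs ! Suc i) = d (xs ! (i - 1)) (xs ! Suc i)
      then frag_of (take i xs @ drop (Suc i) xs) else 0)"

definition mag_boundary_gen :: "('a \<Rightarrow> 'a \<Rightarrow> real) \<Rightarrow> 'a list \<Rightarrow> ('a list \<Rightarrow>\<^sub>0 int)" where
  "mag_boundary_gen d xs = (\<Sum>i<length xs. frag_cmul ((-1) ^ i) (mag_face d i xs))"

definition mag_boundary :: "('a \<Rightarrow> 'a \<Rightarrow> real) \<Rightarrow> ('a list \<Rightarrow>\<^sub>0 int) \<Rightarrow> ('a list \<Rightarrow>\<^sub>0 int)" where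
  "mag_boundary d = frag_extend (mag_boundary_gen d)"

definition mag_cycles :: "'a set \<Rightarrow> ('a \<Rightarrow> 'a \<Rightarrow> real) \<Rightarrow> nat \<Rightarrow> real \<Rightarrow> ('a list \<Rightarrow>\<^sub>0 int) set" where
  "mag_cycles M d n l = {c \<in> carrier (MC M d n l). mag_boundary d c = 0}"

definition mag_boundaries :: "'a set \<Rightarrow> ('a \<Rightarrow> 'a \<Rightarrow> real) \<Rightarrow> nat \<Rightarrow> real \<Rightarrow> ('a list \<Rightarrow>\<^sub>0 int) set" where
  "mag_boundaries M d n l = mag_boundary d ` carrier (MC M d (Suc n) l)"

definition HM :: "'a set \<Rightarrow> ('a \<Rightarrow> 'a \<Rightarrow> real) \<Rightarrow> nat \<Rightarrow> real \<Rightarrow> ('a list \<Rightarrow>\<^sub>0 int) set monoid" where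
  "HM M d n l = subgroup_generated (MC M d n l) (mag_cycles M d n l) Mod mag_boundaries M d n l"

definition adjacent_pairs :: "'a set \<Rightarrow> ('a \<Rightarrow> 'a \<Rightarrow> real) \<Rightarrow> real \<Rightarrow> ('a \<times> 'a) set" where
  "adjacent_pairs M d l = {(x, y). x \<in> M \<and> y \<in> M \<and> x \<noteq> y \<and> adjacent M d x y \<and> d x y = l}"

definition pair_class_map :: "'a set \<Rightarrow> ('a \<Rightarrow> 'a \<Rightarrow> real) \<Rightarrow> real \<Rightarrow> ('a \<times> 'a \<Rightarrow>\<^sub>0 int) \<Rightarrow> ('a list \<Rightarrow>\<^sub>0 int) set" where
  "pair_class_map M d l c =
     r_coset (MC M d 1 l) (mag_boundaries M d 1 l) (frag_extend (\<lambda>p. frag_of [fst p, snd p]) c)"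

end

theory Submission
  imports Defs
begin

lemma len2_cases: "length xs = 2 \<Longrightarrow> \<exists>a b. xs = [a, b]"
  by (cases xs; cases "tl xs"; auto)

lemma len3_cases: "length xs = 3 \<Longrightarrow> \<exists>a b c. xs = [a, b, c]"
  by (cases xs; cases "tl xs"; cases "tl (tl xs)"; auto simp: numeral_eq_Suc)
lemma T1_mem: "[a, b] \<in> mag_tuples M d 1 l \<longleftrightarrow> a \<in> M \<and> b \<in> M \<and> a \<noteq> b \<and> d a b = l"
  by (simp add: mag_tuples_def)

lemma T1_eq: "mag_tuples M d 1 l = {[x, z] | x z. x \<in> M \<and> z \<in> M \<and> x \<noteq> z \<and> d x z = l}"
proof (intro equalityI subsetI)
  fix xs assume xs: "xs \<in> mag_tuples M d 1 l"
  then have "length xs = 2" by (simp add: mag_tuples_def)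
  then obtain a b where ab: "xs = [a,b]" using len2_cases by blast
  have "a \<in> M \<and> b \<in> M \<and> a \<noteq> b \<and> d a b = l" using xs unfolding ab by (metis T1_mem)
  then show "xs \<in> {[x, z] | x z. x \<in> M \<and> z \<in> M \<and> x \<noteq> z \<and> d x z = l}"
    by (simp add: ab)
next
  fix xs assume "xs \<in> {[x, z] | x z. x \<in> M \<and> z \<in> M \<and> x \<noteq> z \<and> d x z = l}"
  then obtain a b where "xs = [a,b]" "a \<in> M \<and> b \<in> M \<and> a \<noteq> b \<and> d a b = l" by blast
  then show "xs \<in> mag_tuples M d 1 l" by (metis T1_mem)
qed

lemma T2_mem: "[a, b, c] \<in> mag_tuples M d 2 l \<longleftrightarrow> a \<in> M \<and> b \<in> M \<and> c \<in> M \<and> a \<noteq> b \<and> b \<noteq> c \<and> d a b + d b c = l"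
proof -
  have "{..<2::nat} = {0,1}" by auto
  then show ?thesis by (simp add: mag_tuples_def less_Suc_eq numeral_2_eq_2) blast
qed

lemma T2_eq: "mag_tuples M d 2 l = {[x, y, z] | x y z. x \<in> M \<and> y \<in> M \<and> z \<in> M \<and> x \<noteq> y \<and> y \<noteq> z \<and> d x y + d y z = l}"
proof (intro equalityI subsetI)
  fix xs assume xs: "xs \<in> mag_tuples M d 2 l"
  then have "length xs = 3" by (simp add: mag_tuples_def)
  then obtain a b c where ab: "xs = [a,b,c]" using len3_cases by blast
  have "a \<in> M \<and> b \<in> M \<and> c \<in> M \<and> a \<noteq> b \<and> b \<noteq> c \<and> d a b + d b c = l" using xs unfolding ab by (metis T2_mem)
  then show "xs \<in> {[x, y, z] | x y z. x \<in> M \<and> y \<in> M \<and> z \<in> M \<and> x \<noteq> y \<and> y \<noteq> z \<and> d x y + d y z = l}"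
    by (simp add: ab)
next
  fix xs assume "xs \<in> {[x, y, z] | x y z. x \<in> M \<and> y \<in> M \<and> z \<in> M \<and> x \<noteq> y \<and> y \<noteq> z \<and> d x y + d y z = l}"
  then obtain a b c where "xs = [a,b,c]" "a \<in> M \<and> b \<in> M \<and> c \<in> M \<and> a \<noteq> b \<and> b \<noteq> c \<and> d a b + d b c = l" by blast
  then show "xs \<in> mag_tuples M d 2 l" by (metis T2_mem)
qed

lemma gen2: "mag_boundary_gen d [a, b] = 0"
proof -
  have "{..<length [a,b]} = {0,1::nat}" by auto
  then show ?thesis by (simp add: mag_boundary_gen_def mag_face_def)
qed

lemma gen3: "mag_boundary_gen d [a, b, c] =
   (if d a b + d b c = d a c then - frag_of [a, c] else 0)"
proof -
  have "{..<length [a,b,c]} = {0,1,2::nat}" by auto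
  then show ?thesis by (simp add: mag_boundary_gen_def mag_face_def)
qed

lemma cycles1: "mag_cycles M d 1 l = carrier (MC M d 1 l)"
proof -
  have "mag_boundary d c = 0" if "c \<in> carrier (MC M d 1 l)" for c
    unfolding mag_boundary_def
  proof (rule frag_extend_eq_0)
    fix x assume "x \<in> Poly_Mapping.keys c"
    then have "x \<in> mag_tuples M d 1 l" using that by (auto simp: MC_def)
    then obtain a b where "x = [a,b]" unfolding T1_eq by blast
    then show "mag_boundary_gen d x = 0" by (simp add: gen2)
  qed
  then show ?thesis unfolding mag_cycles_def by blast
qed

lemma HM1: "HM M d 1 l = MC M d 1 l Mod mag_boundaries M d 1 l"
proof -
  have "group (MC M d 1 l)" by (simp add: MC_def)
  then show ?thesis unfolding HM_def cycles1
    by (simp add: group.subgroup_generated_group_carrier)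
qed

definition NA :: "'a set \<Rightarrow> ('a \<Rightarrow> 'a \<Rightarrow> real) \<Rightarrow> real \<Rightarrow> 'a list set" where
  "NA M d l = {[x, z] | x z. x \<in> M \<and> z \<in> M \<and> x \<noteq> z \<and> d x z = l \<and> \<not> adjacent M d x z}"

definition AA :: "'a set \<Rightarrow> ('a \<Rightarrow> 'a \<Rightarrow> real) \<Rightarrow> real \<Rightarrow> 'a list set" where
  "AA M d l = {[x, z] | x z. x \<in> M \<and> z \<in> M \<and> x \<noteq> z \<and> d x z = l \<and> adjacent M d x z}"

lemma T1_split: "mag_tuples M d 1 l = AA M d l \<union> NA M d l"
  unfolding T1_eq AA_def NA_def by auto

lemma AN_disj: "AA M d l \<inter> NA M d l = {}"
  unfolding AA_def NA_def by auto

lemma bnd_sub: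
  assumes ms: "Metric_space M d" and c: "c \<in> carrier (MC M d 2 l)"
  shows "Poly_Mapping.keys (mag_boundary d c) \<subseteq> NA M d l"
proof -
  have "Poly_Mapping.keys (mag_boundary_gen d x) \<subseteq> NA M d l" if x: "x \<in> Poly_Mapping.keys c" for x
  proof -
    have "x \<in> mag_tuples M d 2 l" using x c by (auto simp: MC_def)
    then obtain a b e where xe: "x = [a,b,e]" and h: "a \<in> M" "b \<in> M" "e \<in> M" "a \<noteq> b" "b \<noteq> e"
       "d a b + d b e = l" unfolding T2_eq by blast
    show ?thesis
    proof (cases "d a b + d b e = d a e")
      case True
      have "a \<noteq> e"
      proof
        assume "a = e"
        then have "d a b + d b a = 0" using True h Metric_space.mdist_zero[OF ms] by simp
        moreover have "0 < d a b" using Metric_space.mdist_pos_less[OF ms] h by blast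
        moreover have "0 \<le> d b a" using Metric_space.nonneg[OF ms] by blast
        ultimately show False by linarith
      qed
      moreover have "\<not> adjacent M d a e"
        unfolding adjacent_def strictly_between_def using True h by blast
      ultimately have "[a,e] \<in> NA M d l" unfolding NA_def using h True by auto
      then show ?thesis using True by (simp add: xe gen3 keys_frag_of)
    next
      case False
      then show ?thesis by (simp add: xe gen3)
    qed
  qed
  then show ?thesis unfolding mag_boundary_def
    using keys_frag_extend[of "mag_boundary_gen d" c] by blast
qed

lemma bnd_sup:
  assumes ms: "Metric_space M d" and c: "Poly_Mapping.keys c \<subseteq> NA M d l"
  shows "c \<in> mag_boundary d ` carrier (MC M d 2 l)"
  using c
proof (induction c rule: frag_induction)
  case zero
  have "0 \<in> carrier (MC M d 2 l)" by (simp add: MC_def)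
  then show ?case unfolding mag_boundary_def by force
next
  case (one x)
  then obtain a e where xe: "x = [a,e]" and h: "a \<in> M" "e \<in> M" "a \<noteq> e" "d a e = l"
    "\<not> adjacent M d a e" unfolding NA_def by blast
  then obtain b where b: "strictly_between M d a b e" unfolding adjacent_def by blast
  then have hb: "b \<in> M" "d a b + d b e = d a e" "a \<noteq> b" "b \<noteq> e"
    unfolding strictly_between_def by auto
  have "[a,b,e] \<in> mag_tuples M d 2 l" unfolding T2_eq using h hb by auto
  then have "- frag_of [a,b,e] \<in> carrier (MC M d 2 l)" by (simp add: MC_def keys_frag_of)
  moreover have "mag_boundary d (- frag_of [a,b,e]) = frag_of x"
    unfolding mag_boundary_def frag_extend_minus using hb by (simp add: gen3 xe)
  ultimately show ?case by (metis image_eqI)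
next
  case (diff a b)
  then obtain a' b' where "a' \<in> carrier (MC M d 2 l)" "b' \<in> carrier (MC M d 2 l)"
    "a = mag_boundary d a'" "b = mag_boundary d b'" by blast
  moreover have "a' - b' \<in> carrier (MC M d 2 l)"
    using calculation keys_diff[of a' b'] by (auto simp: MC_def)
  ultimately show ?case unfolding mag_boundary_def
    by (metis frag_extend_diff image_eqI)
qed

lemma boundaries_eq:
  assumes ms: "Metric_space M d"
  shows "mag_boundaries M d 1 l = {c. Poly_Mapping.keys c \<subseteq> NA M d l}"
proof -
  have e: "Suc 1 = (2::nat)" by simp
  show ?thesis unfolding mag_boundaries_def e
    using bnd_sub[OF ms] bnd_sup[OF ms] by blast
qed

lemma carrier_MC: "carrier (MC M d n l) = {c. Poly_Mapping.keys c \<subseteq> mag_tuples M d n l}"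
  by (simp add: MC_def free_Abelian_group_def)

lemma group_MC: "group (MC M d n l)"
  by (simp add: MC_def)

lemma comm_group_MC: "comm_group (MC M d n l)"
  by (simp add: MC_def abelian_free_Abelian_group)

lemma mult_MC: "x \<otimes>\<^bsub>MC M d n l\<^esub> y = x + y"
  by (simp add: MC_def)

lemma inv_MC: "x \<in> carrier (MC M d n l) \<Longrightarrow> inv\<^bsub>MC M d n l\<^esub> x = - x"
  by (simp add: MC_def)

lemma subgroup_B:
  assumes ms: "Metric_space M d"
  shows "subgroup (mag_boundaries M d 1 l) (MC M d 1 l)"
proof (rule group.subgroupI[OF group_MC])
  show "mag_boundaries M d 1 l \<subseteq> carrier (MC M d 1 l)"
    unfolding boundaries_eq[OF ms] carrier_MC T1_split by auto
  show "mag_boundaries M d 1 l \<noteq> {}"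
  proof -
    have "(0::'a list \<Rightarrow>\<^sub>0 int) \<in> {c. Poly_Mapping.keys c \<subseteq> NA M d l}" by simp
    then show ?thesis unfolding boundaries_eq[OF ms] by blast
  qed
next
  fix a assume "a \<in> mag_boundaries M d 1 l"
  moreover then have "a \<in> carrier (MC M d 1 l)"
    unfolding boundaries_eq[OF ms] carrier_MC T1_split by auto
  ultimately show "inv\<^bsub>MC M d 1 l\<^esub> a \<in> mag_boundaries M d 1 l"
    unfolding inv_MC[OF \<open>a \<in> carrier (MC M d 1 l)\<close>] boundaries_eq[OF ms] by simp
next
  fix a b assume "a \<in> mag_boundaries M d 1 l" "b \<in> mag_boundaries M d 1 l"
  then show "a \<otimes>\<^bsub>MC M d 1 l\<^esub> b \<in> mag_boundaries M d 1 l"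
    unfolding boundaries_eq[OF ms] mult_MC using keys_add[of a b] by auto
qed


lemma iso_main:
  fixes M :: "'a set" and d :: "'a \<Rightarrow> 'a \<Rightarrow> real"
  assumes ms: "Metric_space M d"
  shows "pair_class_map M d l \<in> iso (free_Abelian_group (adjacent_pairs M d l)) (HM M d 1 l)"
proof -
  define G where "G = MC M d 1 l"
  define B where "B = mag_boundaries M d 1 l"
  define F where "F = free_Abelian_group (adjacent_pairs M d l)"
  define g where "g = (\<lambda>p::'a\<times>'a. [fst p, snd p])"
  define h where "h = (\<lambda>xs::'a list. (xs!0, xs!1))"
  define psi where "psi = frag_extend (frag_of \<circ> g)"
  define chi where "chi = frag_extend (frag_of \<circ> h)"
  have grp: "group G" unfolding G_def by (rule group_MC)
  have sub: "subgroup B G" unfolding G_def B_def by (rule subgroup_B[OF ms])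
  have nrm: "B \<lhd> G" unfolding G_def using comm_group.subgroup_imp_normal[OF comm_group_MC] sub
    by (simp add: G_def)
  have Beq: "B = {c. Poly_Mapping.keys c \<subseteq> NA M d l}" unfolding B_def by (rule boundaries_eq[OF ms])
  have Gc: "carrier G = {c. Poly_Mapping.keys c \<subseteq> AA M d l \<union> NA M d l}"
    unfolding G_def carrier_MC T1_split ..
  have multG: "\<And>x y. x \<otimes>\<^bsub>G\<^esub> y = x + y" unfolding G_def by (rule mult_MC)
  have invG: "\<And>x. x \<in> carrier G \<Longrightarrow> inv\<^bsub>G\<^esub> x = - x" unfolding G_def by (rule inv_MC)
  have HMeq: "HM M d 1 l = G Mod B" unfolding G_def B_def by (rule HM1)
  have pcm: "pair_class_map M d l = (\<lambda>a. B #>\<^bsub>G\<^esub> a) \<circ> psi"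
    by (rule ext) (simp add: pair_class_map_def G_def B_def psi_def g_def o_def)
  have gAA: "g p \<in> AA M d l" if "p \<in> adjacent_pairs M d l" for p
    using that unfolding adjacent_pairs_def AA_def g_def by auto
  have hAP: "h xs \<in> adjacent_pairs M d l" if "xs \<in> AA M d l" for xs
    using that unfolding adjacent_pairs_def AA_def h_def by auto
  have hg: "h (g p) = p" for p unfolding h_def g_def by simp
  have ghA: "g (h xs) = xs" if "xs \<in> AA M d l" for xs
    using that unfolding AA_def g_def h_def by auto
  have keyspsi: "Poly_Mapping.keys (psi c) \<subseteq> AA M d l" if "Poly_Mapping.keys c \<subseteq> adjacent_pairs M d l" for c
  proof -
    have "(\<Union>x\<in>Poly_Mapping.keys c. Poly_Mapping.keys ((frag_of \<circ> g) x)) \<subseteq> AA M d l"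
      using that gAA by (auto simp: keys_frag_of)
    then show ?thesis using keys_frag_extend[of "frag_of \<circ> g" c] unfolding psi_def by blast
  qed
  have keyschi: "Poly_Mapping.keys (chi c) \<subseteq> adjacent_pairs M d l" if "Poly_Mapping.keys c \<subseteq> AA M d l" for c
  proof -
    have "(\<Union>x\<in>Poly_Mapping.keys c. Poly_Mapping.keys ((frag_of \<circ> h) x)) \<subseteq> adjacent_pairs M d l"
      using that hAP by (auto simp: keys_frag_of)
    then show ?thesis using keys_frag_extend[of "frag_of \<circ> h" c] unfolding chi_def by blast
  qed
  have chipsi: "chi (psi c) = c" for c
  proof -
    have "chi (psi c) = frag_extend ((frag_of \<circ> h) \<circ> g) c"
      unfolding chi_def psi_def by (rule frag_extend_compose)
    also have "(frag_of \<circ> h) \<circ> g = frag_of" by (rule ext) (simp add: hg)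
    finally show ?thesis by (metis frag_expansion)
  qed
  have psichi: "psi (chi c) = c" if "Poly_Mapping.keys c \<subseteq> AA M d l" for c
  proof -
    have "psi (chi c) = frag_extend ((frag_of \<circ> g) \<circ> h) c"
      unfolding chi_def psi_def by (rule frag_extend_compose)
    also have "\<dots> = frag_extend frag_of c"
      by (rule frag_extend_eq) (use that ghA in auto)
    finally show ?thesis by (metis frag_expansion)
  qed
  have psi_diff: "psi (a - b) = psi a - psi b" for a b unfolding psi_def by (rule frag_extend_diff)
  have psihom: "psi \<in> hom F G"
  proof (rule homI)
    fix x assume "x \<in> carrier F"
    then show "psi x \<in> carrier G" using keyspsi unfolding F_def Gc by auto
  next
    fix x y show "psi (x \<otimes>\<^bsub>F\<^esub> y) = psi x \<otimes>\<^bsub>G\<^esub> psi y"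
      unfolding F_def multG by (simp add: psi_def frag_extend_add)
  qed
  have hom: "pair_class_map M d l \<in> hom F (G Mod B)"
    unfolding pcm by (rule hom_compose[OF psihom normal.r_coset_hom_Mod[OF nrm]])
  have psiG: "psi c \<in> carrier G" if "c \<in> carrier F" for c
    using psihom that by (simp add: hom_def Pi_def)
  have inj: "inj_on (pair_class_map M d l) (carrier F)"
  proof (rule inj_onI)
    fix c1 c2 assume c1: "c1 \<in> carrier F" and c2: "c2 \<in> carrier F"
      and eq: "pair_class_map M d l c1 = pair_class_map M d l c2"
    then have eq': "B #>\<^bsub>G\<^esub> psi c1 = B #>\<^bsub>G\<^esub> psi c2" by (simp add: pcm)
    have "psi c1 \<in> B #>\<^bsub>G\<^esub> psi c1" by (rule group.rcos_self[OF grp psiG[OF c1] sub])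
    then have "psi c1 \<in> B #>\<^bsub>G\<^esub> psi c2" using eq' by simp
    then have "psi c1 \<otimes>\<^bsub>G\<^esub> inv\<^bsub>G\<^esub> psi c2 \<in> B"
      by (rule subgroup.rcos_module_imp[OF sub grp psiG[OF c2]])
    then have "psi (c1 - c2) \<in> B" by (simp add: multG invG[OF psiG[OF c2]] psi_diff)
    then have kN: "Poly_Mapping.keys (psi (c1 - c2)) \<subseteq> NA M d l" using Beq by simp
    have "Poly_Mapping.keys (c1 - c2) \<subseteq> adjacent_pairs M d l"
      using c1 c2 keys_diff[of c1 c2] unfolding F_def by auto
    then have kA: "Poly_Mapping.keys (psi (c1 - c2)) \<subseteq> AA M d l" by (rule keyspsi)
    have "psi (c1 - c2) = 0" using kN kA AN_disj[of M d l] by (metis keys_eq_empty subset_empty Int_greatest)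
    then have "c1 - c2 = 0" by (metis chipsi chi_def frag_extend_0)
    then show "c1 = c2" by simp
  qed
  have surj: "carrier (G Mod B) \<subseteq> pair_class_map M d l ` carrier F"
  proof
    fix X assume "X \<in> carrier (G Mod B)"
    then obtain a where a: "a \<in> carrier G" and X: "X = B #>\<^bsub>G\<^esub> a" by (auto simp: carrier_FactGroup)
    then have "Poly_Mapping.keys a \<subseteq> AA M d l \<union> NA M d l" using Gc by simp
    then obtain u v where u: "Poly_Mapping.keys u \<subseteq> AA M d l" and v: "Poly_Mapping.keys v \<subseteq> NA M d l"
      and uv: "u + v = a" by (rule frag_split)
    have uG: "u \<in> carrier G" using u Gc by auto
    have cF: "chi u \<in> carrier F" using keyschi[OF u] unfolding F_def by simp
    have "a \<otimes>\<^bsub>G\<^esub> inv\<^bsub>G\<^esub> u \<in> B" proof -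
      have "a - u = v" using uv by (metis add_diff_cancel_left')
      then show ?thesis using v by (simp add: multG invG[OF uG] Beq)
    qed
    then have "a \<in> B #>\<^bsub>G\<^esub> u" by (rule subgroup.rcos_module_rev[OF sub grp uG a])
    then have "B #>\<^bsub>G\<^esub> u = B #>\<^bsub>G\<^esub> a" by (rule group.repr_independence[OF grp _ uG sub])
    then have "X = pair_class_map M d l (chi u)" by (simp add: X pcm psichi[OF u])
    then show "X \<in> pair_class_map M d l ` carrier F" using cF by blast
  qed
  have "pair_class_map M d l ` carrier F \<subseteq> carrier (G Mod B)"
    using hom by (auto simp: hom_def Pi_def)
  with surj inj hom show ?thesis unfolding HMeq F_def[symmetric]
    by (auto simp: iso_def bij_betw_def)
qed

lemma group_HM1:
  assumes ms: "Metric_space M d"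
  shows "group (HM M d 1 l)"
proof -
  have "mag_boundaries M d 1 l \<lhd> MC M d 1 l"
    using comm_group.subgroup_imp_normal[OF comm_group_MC] subgroup_B[OF ms] by blast
  then show ?thesis unfolding HM1 by (rule normal.factorgroup_is_group)
qed

lemma trivial_iff:
  fixes M :: "'a set" and d :: "'a \<Rightarrow> 'a \<Rightarrow> real"
  assumes ms: "Metric_space M d"
  shows "trivial_group (HM M d 1 l) \<longleftrightarrow> adjacent_pairs M d l = {}"
proof -
  let ?F = "free_Abelian_group (adjacent_pairs M d l)"
  let ?h = "pair_class_map M d l"
  have bij: "bij_betw ?h (carrier ?F) (carrier (HM M d 1 l))"
    using iso_main[OF ms, of l] by (simp add: iso_def)
  have "trivial_group (HM M d 1 l) \<longleftrightarrow> (\<exists>a. carrier (HM M d 1 l) = {a})"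
    by (rule group.trivial_group[OF group_HM1[OF ms]])
  also have "\<dots> \<longleftrightarrow> (\<exists>a. carrier ?F = {a})"
  proof
    assume "\<exists>a. carrier (HM M d 1 l) = {a}"
    then obtain b where b: "carrier (HM M d 1 l) = {b}" by blast
    have "x = y" if "x \<in> carrier ?F" "y \<in> carrier ?F" for x y
    proof -
      have "?h x = ?h y" using bij_betw_apply[OF bij that(1)] bij_betw_apply[OF bij that(2)] b by simp
      then show ?thesis using bij that by (auto simp: bij_betw_def inj_on_def)
    qed
    moreover have "(0::'a\<times>'a \<Rightarrow>\<^sub>0 int) \<in> carrier ?F" by simp
    ultimately show "\<exists>a. carrier ?F = {a}" by blast
  next
    assume "\<exists>a. carrier ?F = {a}"
    then obtain a where "carrier ?F = {a}" by blast
    then have "carrier (HM M d 1 l) = {?h a}" using bij by (auto simp: bij_betw_def)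
    then show "\<exists>a. carrier (HM M d 1 l) = {a}" by blast
  qed
  also have "\<dots> \<longleftrightarrow> adjacent_pairs M d l = {}"
  proof
    assume "\<exists>a. carrier ?F = {a}"
    then obtain a where a: "carrier ?F = {a}" by blast
    show "adjacent_pairs M d l = {}"
    proof (rule ccontr)
      assume "adjacent_pairs M d l \<noteq> {}"
      then obtain p where p: "p \<in> adjacent_pairs M d l" by blast
      have "frag_of p \<in> carrier ?F" using p by simp
      moreover have "(0::'a\<times>'a \<Rightarrow>\<^sub>0 int) \<in> carrier ?F" by simp
      ultimately show False using a frag_of_nonzero[of p] by (metis singletonD)
    qed
  next
    assume "adjacent_pairs M d l = {}"
    then have "carrier ?F = {0}" by (auto simp: free_Abelian_group_def)
    then show "\<exists>a. carrier ?F = {a}" by blast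
  qed
  finally show ?thesis .
qed

theorem corollary7p6:
  fixes M :: "'a set" and d :: "'a \<Rightarrow> 'a \<Rightarrow> real"
  assumes "Metric_space M d"
  shows "(\<forall>l. pair_class_map M d l \<in> iso (free_Abelian_group (adjacent_pairs M d l)) (HM M d 1 l))
         \<and> ((\<forall>l. trivial_group (HM M d 1 l)) \<longleftrightarrow> Menger_convex M d)"
proof
  show "\<forall>l. pair_class_map M d l \<in> iso (free_Abelian_group (adjacent_pairs M d l)) (HM M d 1 l)"
    using iso_main[OF assms] by blast
  have "(\<forall>l. trivial_group (HM M d 1 l)) \<longleftrightarrow> (\<forall>l. adjacent_pairs M d l = {})"
    using trivial_iff[OF assms] by blast
  also have "\<dots> \<longleftrightarrow> Menger_convex M d"
    unfolding Menger_convex_def adjacent_pairs_def by auto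
  finally show "(\<forall>l. trivial_group (HM M d 1 l)) \<longleftrightarrow> Menger_convex M d" .
qed

end
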